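(* Assume no treatment anticipation, missingness as an absorbing state, random sampling, the selection model, and monotonicity. Assume also that $\mathbb{E}[S_{it}\mid G_i=g]>0$ for all $t,g$. If positive monotonicity holds ($S_{i2}(1)\ge S_{i2}(0)$ for all $i$), then $\pi_0=1$ and $$\pi_1=\frac{\mathbb{E}[S_{i2}(0)\mid G_i=1]}{\mathbb{E}[S_{i2}\mid G_i=1]}=\frac{\mathbb{E}[S_{i1}\mid G_i=1]}{\mathbb{E}[S_{i2}\mid G_i=1]}\cdot\frac{\mathbb{E}[S_{i2}\mid G_i=0]}{\mathbb{E}[S_{i1}\mid G_i=0]}\in[0,1].$$ If negative monotonicity holds ($S_{i2}(1)\le S_{i2}(0)$ for all $i$), then $\pi_1=1$ and $$\pi_0=\frac{\mathbb{E}[S_{i2}(1)\mid G_i=0]}{\mathbb{E}[S_{i2}\mid G_i=0]}=\frac{\mathbb{E}[S_{i1}\mid G_i=0]}{\mathbb{E}[S_{i2}\mid G_i=0]}\cdot\frac{\mathbb{E}[S_{i2}\mid G_i=1]}{\mathbb{E}[S_{i1}\mid G_i=1]}\in[0,1].$$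
   Context: Units $i$ are observed in periods $t\in\{1,2\}$. $G_i\in\{0,1\}$ indicates that unit $i$ is treated in period 2; nobody is treated in period 1. Period-2 potential selection indicators are $S_{i2}(1),S_{i2}(0)\in\{0,1\}$, where 1 means the outcome is observed. The observed indicator is $S_{i2}=G_iS_{i2}(1)+(1-G_i)S_{i2}(0)$. No anticipation: $S_{i1}$ does not depend on the period-2 treatment, so $S_{i1}(1)=S_{i1}(0)=S_{i1}$. Missingness is absorbing: $S_{i1}=0\Rightarrow S_{i2}=0$. Random sampling: $\{S_{i1},S_{i2},G_i\}$ are i.i.d. across units. Definitions: - $\pi_1=\Pr(S_{i2}(0)=1\mid G_i=1,S_{i2}(1)=1)$. - $\pi_0=\Pr(S_{i2}(1)=1\mid G_i=0,S_{i2}(0)=1)$. Selection model: $S_{it}(0)=h^0(U_{it},t)$ and $S_{it}(1)=h^1(U_{it},t)$, where: - $U_{it}$ is an unobserved scalar; - $h^w(u,t)$ is non-decreasing in $u$ for all $t\in\{1,2\}$ and $w\in\{0,1\}$; - $U$ is continuously distributed, with the same compact support in both groups; - the distribution of $U_{i1}$ given $G_i$ equals that of $U_{i2}$ given $G_i$; - $U_{it}$ is independent of $G_i$ given $S_{it}$, for each $t$. Monotonicity means that either positive monotonicity ($S_{i2}(1)\ge S_{i2}(0)$ for all $i$) or negative monotonicity ($S_{i2}(1)\le S_{i2}(0)$ for all $i$) holds. *)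

theory Defs
  imports "HOL-Probability.Probability"
begin

definition cond_support :: "'a measure \<Rightarrow> ('a \<Rightarrow> real) \<Rightarrow> ('a \<Rightarrow> bool) \<Rightarrow> real set" where
  "cond_support M X Q = {x. \<forall>e>0. cond_prob M (\<lambda>\<omega>. dist (X \<omega>) x < e) Q > 0}"

end

theory Submission
  imports Defs
begin

definition upset :: "real set \<Rightarrow> bool" where
  "upset A \<longleftrightarrow> (\<forall>x y. x \<in> A \<longrightarrow> x \<le> y \<longrightarrow> y \<in> A)"

lemma upset_borel:
  assumes "upset A" shows "A \<in> sets borel"
proof -
  have m: "mono (\<lambda>u. of_bool (u \<in> A) :: real)"
    using assms unfolding upset_def mono_def by auto
  have "(\<lambda>u. of_bool (u \<in> A) :: real) -` {1} \<inter> space borel \<in> sets borel"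
    by (rule measurable_sets[OF borel_measurable_mono[OF m]]) auto
  moreover have "(\<lambda>u. of_bool (u \<in> A) :: real) -` {1} \<inter> space borel = A" by auto
  ultimately show ?thesis by simp
qed

lemma upset_mono:
  fixes h :: "real \<Rightarrow> bool" assumes "mono h" shows "upset {u. h u}"
  using assms unfolding upset_def mono_def le_bool_def by blast

lemma upset_total:
  assumes "upset A" "upset B" shows "B \<subseteq> A \<or> A \<subseteq> B"
  using assms unfolding upset_def by (meson linear subsetI)

lemma extreme_set:
  fixes D :: "real set"
  shows "{x\<in>D. \<forall>y\<in>D. x \<le> y} = {} \<or> (\<exists>a. {x\<in>D. \<forall>y\<in>D. x \<le> y} = {a})"
        "{x\<in>D. \<forall>y\<in>D. y \<le> x} = {} \<or> (\<exists>a. {x\<in>D. \<forall>y\<in>D. y \<le> x} = {a})"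
proof -
  show "{x\<in>D. \<forall>y\<in>D. x \<le> y} = {} \<or> (\<exists>a. {x\<in>D. \<forall>y\<in>D. x \<le> y} = {a})"
  proof (cases "{x\<in>D. \<forall>y\<in>D. x \<le> y} = {}")
    case False
    then obtain a where a: "a \<in> D" "\<forall>y\<in>D. a \<le> y" by blast
    have "{x\<in>D. \<forall>y\<in>D. x \<le> y} = {a}"
    proof safe
      fix x assume "x \<in> D" "\<forall>y\<in>D. x \<le> y"
      then show "x = a" using a by (meson order_antisym)
    qed (use a in auto)
    then show ?thesis by blast
  qed simp
  show "{x\<in>D. \<forall>y\<in>D. y \<le> x} = {} \<or> (\<exists>a. {x\<in>D. \<forall>y\<in>D. y \<le> x} = {a})"
  proof (cases "{x\<in>D. \<forall>y\<in>D. y \<le> x} = {}")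
    case False
    then obtain a where a: "a \<in> D" "\<forall>y\<in>D. y \<le> a" by blast
    have "{x\<in>D. \<forall>y\<in>D. y \<le> x} = {a}"
    proof safe
      fix x assume "x \<in> D" "\<forall>y\<in>D. y \<le> x"
      then show "x = a" using a by (meson order_antisym)
    qed (use a in auto)
    then show ?thesis by blast
  qed simp
qed

context prob_space begin

lemma null_of_measure0: "N \<in> events \<Longrightarrow> prob N = 0 \<Longrightarrow> N \<in> null_sets M"
  by (metis emeasure_eq_measure ennreal_0 null_setsI)

lemma key:
  assumes [measurable]: "G \<in> measurable M (count_space UNIV)" "U1 \<in> borel_measurable M" "U2 \<in> borel_measurable M"
   and uA: "upset A" and uB: "upset B"
   and stat: "\<forall>g. \<forall>C\<in>sets borel. \<P>(\<omega> in M. U1 \<omega> \<in> C \<bar> G \<omega> = g) = \<P>(\<omega> in M. U2 \<omega> \<in> C \<bar> G \<omega> = g)"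
   and ci: "\<forall>g. \<forall>C\<in>sets borel. \<P>(\<omega> in M. U1 \<omega> \<in> C \<and> G \<omega> = g \<bar> U1 \<omega> \<in> A)
              = \<P>(\<omega> in M. U1 \<omega> \<in> C \<bar> U1 \<omega> \<in> A) * \<P>(\<omega> in M. G \<omega> = g \<bar> U1 \<omega> \<in> A)"
   and cont: "\<forall>x. \<P>(\<omega> in M. U1 \<omega> = x) = 0"
   and supp: "cond_support M U1 (\<lambda>\<omega>. G \<omega> = g0) = cond_support M U1 (\<lambda>\<omega>. G \<omega> = (\<not>g0))"
   and absorb: "\<forall>\<omega>. G \<omega> = g0 \<longrightarrow> U2 \<omega> \<in> B \<longrightarrow> U1 \<omega> \<in> A"
   and posA: "\<forall>g. \<P>(\<omega> in M. U1 \<omega> \<in> A \<bar> G \<omega> = g) > 0"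
  shows "\<exists>r. \<forall>g. \<P>(\<omega> in M. U2 \<omega> \<in> B \<bar> G \<omega> = g) = r * \<P>(\<omega> in M. U1 \<omega> \<in> A \<bar> G \<omega> = g)"
proof -
  have [measurable]: "A \<in> sets borel" "B \<in> sets borel" using uA uB upset_borel by auto
  define mu where "mu g C = prob {\<omega>\<in>space M. U1 \<omega> \<in> C \<and> G \<omega> = g}" for g C
  define nu where "nu g C = prob {\<omega>\<in>space M. U2 \<omega> \<in> C \<and> G \<omega> = g}" for g C
  define pg where "pg g = prob {\<omega>\<in>space M. G \<omega> = g}" for g
  have pg_pos: "pg g > 0" for g
  proof -
    have "mu g A / pg g > 0" using posA unfolding cond_prob_def mu_def pg_def by auto
    moreover have "pg g \<ge> 0" unfolding pg_def by simp
    ultimately show ?thesis by (cases "pg g = 0") auto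
  qed
  have mu_nu: "mu g C = nu g C" if "C \<in> sets borel" for g C
  proof -
    have "mu g C / pg g = nu g C / pg g" using stat that unfolding cond_prob_def mu_def nu_def pg_def by auto
    then show ?thesis using pg_pos[of g] by (simp add: field_simps)
  qed
  have cp: "\<P>(\<omega> in M. U2 \<omega> \<in> B \<bar> G \<omega> = g) = nu g B / pg g"
       "\<P>(\<omega> in M. U1 \<omega> \<in> A \<bar> G \<omega> = g) = mu g A / pg g" for g
    unfolding cond_prob_def mu_def nu_def pg_def by auto
  have suff: "\<exists>r. \<forall>g. nu g B = r * mu g A"
  proof (cases "B \<subseteq> A")
    case True
    define pA where "pA = prob {\<omega>\<in>space M. U1 \<omega> \<in> A}"
    have "mu True A \<le> pA" unfolding mu_def pA_def by (rule finite_measure_mono) auto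
    moreover have "mu True A > 0"
    proof -
      have "mu True A / pg True > 0" using posA[THEN spec[of _ True]] unfolding cp(2) .
      then show ?thesis using pg_pos[of True] by (simp add: zero_less_divide_iff)
    qed
    ultimately have pA_pos: "pA > 0" by simp
    have "mu g B = (prob {\<omega>\<in>space M. U1 \<omega> \<in> B} / pA) * mu g A" for g
    proof -
      have e: "prob {\<omega>\<in>space M. (U1 \<omega> \<in> B \<and> G \<omega> = g) \<and> U1 \<omega> \<in> A} / pA
         = prob {\<omega>\<in>space M. U1 \<omega> \<in> B \<and> U1 \<omega> \<in> A} / pA * (prob {\<omega>\<in>space M. G \<omega> = g \<and> U1 \<omega> \<in> A} / pA)"
        using ci[THEN spec[of _ g], THEN bspec[of _ _ B]] \<open>B \<in> sets borel\<close> unfolding cond_prob_def pA_def by simp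
      have s1: "{\<omega>\<in>space M. (U1 \<omega> \<in> B \<and> G \<omega> = g) \<and> U1 \<omega> \<in> A} = {\<omega>\<in>space M. U1 \<omega> \<in> B \<and> G \<omega> = g}"
        using True by auto
      have s2: "{\<omega>\<in>space M. U1 \<omega> \<in> B \<and> U1 \<omega> \<in> A} = {\<omega>\<in>space M. U1 \<omega> \<in> B}" using True by auto
      have s3: "{\<omega>\<in>space M. G \<omega> = g \<and> U1 \<omega> \<in> A} = {\<omega>\<in>space M. U1 \<omega> \<in> A \<and> G \<omega> = g}" by auto
      show ?thesis using e pA_pos unfolding s1 s2 s3 mu_def by (simp add: divide_simps)
    qed
    then have "nu g B = (prob {\<omega>\<in>space M. U1 \<omega> \<in> B} / pA) * mu g A" for g
      using mu_nu[of B g] \<open>B \<in> sets borel\<close> by simp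
    then show ?thesis by blast
  next
    case False
    then have AB: "A \<subseteq> B" using upset_total[OF uA uB] by auto
    define D where "D = B - A"
    have [measurable]: "D \<in> sets borel" unfolding D_def by measurable
    have split: "mu g B = mu g A + mu g D" "nu g B = nu g A + nu g D" for g
    proof -
      have "{\<omega>\<in>space M. U1 \<omega> \<in> B \<and> G \<omega> = g} = {\<omega>\<in>space M. U1 \<omega> \<in> A \<and> G \<omega> = g} \<union> {\<omega>\<in>space M. U1 \<omega> \<in> D \<and> G \<omega> = g}"
        using AB unfolding D_def by auto
      moreover have "prob ({\<omega>\<in>space M. U1 \<omega> \<in> A \<and> G \<omega> = g} \<union> {\<omega>\<in>space M. U1 \<omega> \<in> D \<and> G \<omega> = g})
          = prob {\<omega>\<in>space M. U1 \<omega> \<in> A \<and> G \<omega> = g} + prob {\<omega>\<in>space M. U1 \<omega> \<in> D \<and> G \<omega> = g}"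
        by (rule finite_measure_Union) (auto simp: D_def)
      ultimately show "mu g B = mu g A + mu g D" unfolding mu_def by simp
      have "{\<omega>\<in>space M. U2 \<omega> \<in> B \<and> G \<omega> = g} = {\<omega>\<in>space M. U2 \<omega> \<in> A \<and> G \<omega> = g} \<union> {\<omega>\<in>space M. U2 \<omega> \<in> D \<and> G \<omega> = g}"
        using AB unfolding D_def by auto
      moreover have "prob ({\<omega>\<in>space M. U2 \<omega> \<in> A \<and> G \<omega> = g} \<union> {\<omega>\<in>space M. U2 \<omega> \<in> D \<and> G \<omega> = g})
          = prob {\<omega>\<in>space M. U2 \<omega> \<in> A \<and> G \<omega> = g} + prob {\<omega>\<in>space M. U2 \<omega> \<in> D \<and> G \<omega> = g}"
        by (rule finite_measure_Union) (auto simp: D_def)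
      ultimately show "nu g B = nu g A + nu g D" unfolding nu_def by simp
    qed
    have mu_nn: "mu g C \<ge> 0" for g C unfolding mu_def by simp
    have nu_nn: "nu g C \<ge> 0" for g C unfolding nu_def by simp
    have mu_mono: "mu g C \<le> mu g C'" if "C \<subseteq> C'" "C' \<in> sets borel" for g C C'
      unfolding mu_def by (rule finite_measure_mono) (use that in auto)
    have D0: "mu g0 D = 0"
    proof -
      have "nu g0 B \<le> mu g0 A" unfolding nu_def mu_def
        by (rule finite_measure_mono) (use absorb in auto)
      then have "nu g0 D \<le> 0" using split(2)[of g0] mu_nu[of A g0] by simp
      then show ?thesis using nu_nn[of g0 D] mu_nu[of D g0] by simp
    qed
    define g1 where "g1 = (\<not> g0)"
    define F where "F = {ball x e | x e. e > 0 \<and> mu g1 (ball x e) = 0}"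
    define Oo where "Oo = \<Union>F"
    have [measurable]: "Oo \<in> sets borel" unfolding Oo_def F_def by (intro borel_open) auto
    have O0: "mu g1 Oo = 0"
    proof -
      obtain F' where F': "F' \<subseteq> F" "countable F'" "\<Union>F' = \<Union>F"
        using Lindelof[of F] unfolding F_def by auto
      have "(\<Union>b\<in>F'. {\<omega>\<in>space M. U1 \<omega> \<in> b \<and> G \<omega> = g1}) \<in> null_sets M"
      proof (rule null_sets_UN'[OF F'(2)])
        fix b assume "b \<in> F'"
        then obtain x e where b: "b = ball x e" "mu g1 (ball x e) = 0" using F'(1) unfolding F_def by auto
        show "{\<omega>\<in>space M. U1 \<omega> \<in> b \<and> G \<omega> = g1} \<in> null_sets M"
          using b unfolding mu_def by (intro null_of_measure0) auto
      qed
      moreover have "(\<Union>b\<in>F'. {\<omega>\<in>space M. U1 \<omega> \<in> b \<and> G \<omega> = g1}) = {\<omega>\<in>space M. U1 \<omega> \<in> Oo \<and> G \<omega> = g1}"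
        using F'(3) unfolding Oo_def by auto
      ultimately show ?thesis unfolding mu_def by (metis measure_eq_0_null_sets)
    qed
    define L where "L = {x\<in>D. \<forall>y\<in>D. x \<le> y}"
    define R where "R = {x\<in>D. \<forall>y\<in>D. y \<le> x}"
    have pt0: "mu g1 {a} = 0" for a
    proof -
      have "mu g1 {a} \<le> prob {\<omega>\<in>space M. U1 \<omega> = a}" unfolding mu_def
        by (rule finite_measure_mono) auto
      then show ?thesis using cont[THEN spec[of _ a]] mu_nn[of g1 "{a}"] by simp
    qed
    have L0: "mu g1 L = 0 \<and> L \<in> sets borel"
      using extreme_set(1)[of D] pt0 unfolding L_def[symmetric] by (elim disjE exE) (auto simp: mu_def)
    have R0: "mu g1 R = 0 \<and> R \<in> sets borel"
      using extreme_set(2)[of D] pt0 unfolding R_def[symmetric] by (elim disjE exE) (auto simp: mu_def)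
    have Dsub: "D \<subseteq> Oo \<union> L \<union> R"
    proof
      fix x assume xD: "x \<in> D"
      show "x \<in> Oo \<union> L \<union> R"
      proof (cases "x \<in> L \<union> R")
        case True then show ?thesis by auto
      next
        case False
        then obtain y z where yz: "y \<in> D" "z \<in> D" "y < x" "x < z"
          using xD unfolding L_def R_def by (auto simp: not_le)
        define e where "e = min (x - y) (z - x)"
        have epos: "e > 0" unfolding e_def using yz by auto
        have ballD: "ball x e \<subseteq> D"
        proof
          fix w assume "w \<in> ball x e"
          then have "y \<le> w" "w \<le> z" unfolding e_def ball_def dist_real_def by auto
          then show "w \<in> D" using yz(1,2) uA uB unfolding D_def upset_def by blast
        qed
        have evt: "{\<omega>\<in>space M. dist (U1 \<omega>) x < e \<and> G \<omega> = g} = {\<omega>\<in>space M. U1 \<omega> \<in> ball x e \<and> G \<omega> = g}" for g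
          by (auto simp: dist_commute)
        have "mu g0 (ball x e) = 0" using mu_mono[OF ballD, of g0] D0 mu_nn[of g0 "ball x e"] by simp
        then have "\<not> cond_prob M (\<lambda>\<omega>. dist (U1 \<omega>) x < e) (\<lambda>\<omega>. G \<omega> = g0) > 0"
          unfolding cond_prob_def evt mu_def by simp
        then have "x \<notin> cond_support M U1 (\<lambda>\<omega>. G \<omega> = g0)"
          unfolding cond_support_def using epos by auto
        then have "x \<notin> cond_support M U1 (\<lambda>\<omega>. G \<omega> = g1)" using supp unfolding g1_def by simp
        then obtain e' where e': "e' > 0" "\<not> cond_prob M (\<lambda>\<omega>. dist (U1 \<omega>) x < e') (\<lambda>\<omega>. G \<omega> = g1) > 0"
          unfolding cond_support_def by auto
        have evt': "{\<omega>\<in>space M. dist (U1 \<omega>) x < e' \<and> G \<omega> = g} = {\<omega>\<in>space M. U1 \<omega> \<in> ball x e' \<and> G \<omega> = g}" for g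
          by (auto simp: dist_commute)
        have "\<not> mu g1 (ball x e') / pg g1 > 0"
          using e'(2) unfolding cond_prob_def evt' mu_def pg_def by simp
        then have "mu g1 (ball x e') = 0" using pg_pos[of g1] mu_nn[of g1 "ball x e'"]
          by (simp add: zero_less_divide_iff)
        then have "ball x e' \<in> F" unfolding F_def using e'(1) by auto
        moreover have "x \<in> ball x e'" using e'(1) by simp
        ultimately show ?thesis unfolding Oo_def by blast
      qed
    qed
    have g1D: "mu g1 D = 0"
    proof -
      have ev: "{\<omega>\<in>space M. U1 \<omega> \<in> C \<and> G \<omega> = g1} \<in> events" if "C \<in> sets borel" for C
        using that by measurable
      have "mu g1 D \<le> mu g1 (Oo \<union> L \<union> R)" by (rule mu_mono[OF Dsub]) (use L0 R0 in auto)
      also have "\<dots> \<le> mu g1 (Oo \<union> L) + mu g1 R"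
      proof -
        have "{\<omega>\<in>space M. U1 \<omega> \<in> Oo \<union> L \<union> R \<and> G \<omega> = g1} = {\<omega>\<in>space M. U1 \<omega> \<in> Oo \<union> L \<and> G \<omega> = g1} \<union> {\<omega>\<in>space M. U1 \<omega> \<in> R \<and> G \<omega> = g1}"
          by auto
        moreover have "prob ({\<omega>\<in>space M. U1 \<omega> \<in> Oo \<union> L \<and> G \<omega> = g1} \<union> {\<omega>\<in>space M. U1 \<omega> \<in> R \<and> G \<omega> = g1})
           \<le> prob {\<omega>\<in>space M. U1 \<omega> \<in> Oo \<union> L \<and> G \<omega> = g1} + prob {\<omega>\<in>space M. U1 \<omega> \<in> R \<and> G \<omega> = g1}"
          by (rule measure_Un_le; rule ev) (use L0 R0 in auto)
        ultimately show ?thesis unfolding mu_def by simp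
      qed
      also have "\<dots> \<le> mu g1 Oo + mu g1 L + mu g1 R"
      proof -
        have "{\<omega>\<in>space M. U1 \<omega> \<in> Oo \<union> L \<and> G \<omega> = g1} = {\<omega>\<in>space M. U1 \<omega> \<in> Oo \<and> G \<omega> = g1} \<union> {\<omega>\<in>space M. U1 \<omega> \<in> L \<and> G \<omega> = g1}"
          by auto
        moreover have "prob ({\<omega>\<in>space M. U1 \<omega> \<in> Oo \<and> G \<omega> = g1} \<union> {\<omega>\<in>space M. U1 \<omega> \<in> L \<and> G \<omega> = g1})
           \<le> prob {\<omega>\<in>space M. U1 \<omega> \<in> Oo \<and> G \<omega> = g1} + prob {\<omega>\<in>space M. U1 \<omega> \<in> L \<and> G \<omega> = g1}"
          by (rule measure_Un_le; rule ev) (use L0 in auto)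
        ultimately have "mu g1 (Oo \<union> L) \<le> mu g1 Oo + mu g1 L" unfolding mu_def by simp
        then show ?thesis by simp
      qed
      finally show ?thesis using O0 L0 R0 mu_nn[of g1 D] by simp
    qed
    have allD: "mu g D = 0" for g using D0 g1D unfolding g1_def by (cases "g = g0") auto
    show ?thesis
    proof (intro exI[of _ 1] allI)
      fix g
      have "nu g B = nu g A + nu g D" by (rule split)
      also have "\<dots> = mu g A" using mu_nu[of A g] mu_nu[of D g] allD[of g] by simp
      finally show "nu g B = 1 * mu g A" by simp
    qed

  qed
  then obtain r where r: "\<forall>g. nu g B = r * mu g A" by blast
  show ?thesis using r cp by (intro exI[of _ r]) auto
qed
end
context prob_space begin

lemma cond_prob_01:
  assumes "{\<omega>\<in>space M. Q \<omega>} \<in> events"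
  shows "cond_prob M P Q \<in> {0..1}"
proof -
  have "prob {\<omega>\<in>space M. P \<omega> \<and> Q \<omega>} \<le> prob {\<omega>\<in>space M. Q \<omega>}"
    by (rule finite_measure_mono) (use assms in auto)
  then show ?thesis unfolding cond_prob_def
    using measure_nonneg[of M "{\<omega>\<in>space M. Q \<omega>}"]
    by (cases "prob {\<omega>\<in>space M. Q \<omega>} = 0") (auto simp: divide_le_eq_1 less_le)
qed

lemma half:
  assumes [measurable]: "Measurable.pred M G" "Measurable.pred M S1" "Measurable.pred M S20" "Measurable.pred M S21"
    and S2_def: "\<forall>\<omega>. S2 \<omega> = (if G \<omega> then S21 \<omega> else S20 \<omega>)"
    and mon: "\<forall>\<omega>. S20 \<omega> \<longrightarrow> S21 \<omega>"
    and r1: "\<P>(\<omega> in M. S20 \<omega> \<bar> G \<omega>) = r * \<P>(\<omega> in M. S1 \<omega> \<bar> G \<omega>)"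
    and r0: "\<P>(\<omega> in M. S20 \<omega> \<bar> \<not> G \<omega>) = r * \<P>(\<omega> in M. S1 \<omega> \<bar> \<not> G \<omega>)"
    and p1: "\<P>(\<omega> in M. S1 \<omega> \<bar> G \<omega>) > 0" "\<P>(\<omega> in M. S2 \<omega> \<bar> G \<omega>) > 0"
    and p0: "\<P>(\<omega> in M. S1 \<omega> \<bar> \<not> G \<omega>) > 0" "\<P>(\<omega> in M. S2 \<omega> \<bar> \<not> G \<omega>) > 0"
  shows "\<P>(\<omega> in M. S21 \<omega> \<bar> \<not> G \<omega> \<and> S20 \<omega>) = 1 \<and>
            \<P>(\<omega> in M. S20 \<omega> \<bar> G \<omega> \<and> S21 \<omega>)
              = \<P>(\<omega> in M. S20 \<omega> \<bar> G \<omega>) / \<P>(\<omega> in M. S2 \<omega> \<bar> G \<omega>) \<and>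
            \<P>(\<omega> in M. S20 \<omega> \<bar> G \<omega> \<and> S21 \<omega>)
              = (\<P>(\<omega> in M. S1 \<omega> \<bar> G \<omega>) / \<P>(\<omega> in M. S2 \<omega> \<bar> G \<omega>)) *
                (\<P>(\<omega> in M. S2 \<omega> \<bar> \<not> G \<omega>) / \<P>(\<omega> in M. S1 \<omega> \<bar> \<not> G \<omega>)) \<and>
            \<P>(\<omega> in M. S20 \<omega> \<bar> G \<omega> \<and> S21 \<omega>) \<in> {0..1}"
proof -
  define a where "a = prob {\<omega>\<in>space M. G \<omega>}"
  define b where "b = prob {\<omega>\<in>space M. \<not> G \<omega>}"
  define s20g where "s20g = prob {\<omega>\<in>space M. S20 \<omega> \<and> G \<omega>}"
  define s2g where "s2g = prob {\<omega>\<in>space M. S2 \<omega> \<and> G \<omega>}"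
  define s1g where "s1g = prob {\<omega>\<in>space M. S1 \<omega> \<and> G \<omega>}"
  define s2n where "s2n = prob {\<omega>\<in>space M. S2 \<omega> \<and> \<not> G \<omega>}"
  define s1n where "s1n = prob {\<omega>\<in>space M. S1 \<omega> \<and> \<not> G \<omega>}"
  have e1: "\<P>(\<omega> in M. S20 \<omega> \<bar> G \<omega>) = s20g / a" "\<P>(\<omega> in M. S1 \<omega> \<bar> G \<omega>) = s1g / a"
    "\<P>(\<omega> in M. S2 \<omega> \<bar> G \<omega>) = s2g / a" "\<P>(\<omega> in M. S1 \<omega> \<bar> \<not> G \<omega>) = s1n / b"
    "\<P>(\<omega> in M. S2 \<omega> \<bar> \<not> G \<omega>) = s2n / b"
    unfolding cond_prob_def a_def b_def s20g_def s2g_def s1g_def s2n_def s1n_def by simp_all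
  have e2: "\<P>(\<omega> in M. S20 \<omega> \<bar> \<not> G \<omega>) = s2n / b"
    unfolding cond_prob_def b_def s2n_def using S2_def by (simp cong: rev_conj_cong)
  have e3: "\<P>(\<omega> in M. S20 \<omega> \<bar> G \<omega> \<and> S21 \<omega>) = s20g / s2g"
  proof -
    have "{\<omega>\<in>space M. S20 \<omega> \<and> G \<omega> \<and> S21 \<omega>} = {\<omega>\<in>space M. S20 \<omega> \<and> G \<omega>}" using mon by auto
    moreover have "{\<omega>\<in>space M. G \<omega> \<and> S21 \<omega>} = {\<omega>\<in>space M. S2 \<omega> \<and> G \<omega>}" using S2_def by auto
    ultimately show ?thesis unfolding cond_prob_def s20g_def s2g_def by simp
  qed
  have e4: "\<P>(\<omega> in M. S21 \<omega> \<bar> \<not> G \<omega> \<and> S20 \<omega>) = s2n / s2n"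
  proof -
    have "{\<omega>\<in>space M. S21 \<omega> \<and> \<not> G \<omega> \<and> S20 \<omega>} = {\<omega>\<in>space M. S2 \<omega> \<and> \<not> G \<omega>}" using mon S2_def by auto
    moreover have "{\<omega>\<in>space M. \<not> G \<omega> \<and> S20 \<omega>} = {\<omega>\<in>space M. S2 \<omega> \<and> \<not> G \<omega>}" using S2_def by auto
    ultimately show ?thesis unfolding cond_prob_def s2n_def by simp
  qed
  have nn: "a \<ge> 0" "b \<ge> 0" "s2g \<ge> 0" "s1n \<ge> 0" "s2n \<ge> 0" "s1g \<ge> 0"
    unfolding a_def b_def s2g_def s1n_def s2n_def s1g_def by simp_all
  have pos: "a > 0" "b > 0" "s2g > 0" "s1n > 0" "s2n > 0"
    using p1 p0 nn unfolding e1 by (auto simp: zero_less_divide_iff)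
  have rr: "s20g = r * s1g" "s2n = r * s1n"
    using r1 r0 pos unfolding e1 e2 by (auto simp: field_simps)
  show ?thesis
  proof (intro conjI)
    show "\<P>(\<omega> in M. S21 \<omega> \<bar> \<not> G \<omega> \<and> S20 \<omega>) = 1" using e4 pos by simp
    show "\<P>(\<omega> in M. S20 \<omega> \<bar> G \<omega> \<and> S21 \<omega>) = \<P>(\<omega> in M. S20 \<omega> \<bar> G \<omega>) / \<P>(\<omega> in M. S2 \<omega> \<bar> G \<omega>)"
      unfolding e1 e3 using pos by (simp add: field_simps)
    show "\<P>(\<omega> in M. S20 \<omega> \<bar> G \<omega> \<and> S21 \<omega>)
              = (\<P>(\<omega> in M. S1 \<omega> \<bar> G \<omega>) / \<P>(\<omega> in M. S2 \<omega> \<bar> G \<omega>)) *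
                (\<P>(\<omega> in M. S2 \<omega> \<bar> \<not> G \<omega>) / \<P>(\<omega> in M. S1 \<omega> \<bar> \<not> G \<omega>))"
      unfolding e1 e3 rr using pos by (simp add: field_simps)
    show "\<P>(\<omega> in M. S20 \<omega> \<bar> G \<omega> \<and> S21 \<omega>) \<in> {0..1}"
      by (rule cond_prob_01) measurable
  qed
qed

end

theorem proposition3:
  fixes M :: "'a measure"
    and G S1 S21 S20 S2 :: "'a \<Rightarrow> bool"
    and U1 U2 :: "'a \<Rightarrow> real"
    and h0 h1 :: "real \<Rightarrow> nat \<Rightarrow> bool"
  assumes P: "prob_space M"
    (* measurability *)
    and mG: "G \<in> measurable M (count_space UNIV)"
    and mS1: "S1 \<in> measurable M (count_space UNIV)"
    and mS21: "S21 \<in> measurable M (count_space UNIV)"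
    and mS20: "S20 \<in> measurable M (count_space UNIV)"
    and mU1: "U1 \<in> borel_measurable M"
    and mU2: "U2 \<in> borel_measurable M"
    (* observed period-2 selection indicator *)
    and S2_def: "\<forall>\<omega>. S2 \<omega> = (if G \<omega> then S21 \<omega> else S20 \<omega>)"
    (* selection model, with no anticipation in period 1 *)
    and sel1: "\<forall>\<omega>. S1 \<omega> = h0 (U1 \<omega>) 1 \<and> S1 \<omega> = h1 (U1 \<omega>) 1"
    and sel2: "\<forall>\<omega>. S20 \<omega> = h0 (U2 \<omega>) 2 \<and> S21 \<omega> = h1 (U2 \<omega>) 2"
    and h_mono: "\<forall>t\<in>{1,2}. mono (\<lambda>u. h0 u t) \<and> mono (\<lambda>u. h1 u t)"
    and U_cont: "\<forall>x. \<P>(\<omega> in M. U1 \<omega> = x) = 0 \<and> \<P>(\<omega> in M. U2 \<omega> = x) = 0"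
    and U_supp: "\<exists>K. compact K \<and>
        (\<forall>g. cond_support M U1 (\<lambda>\<omega>. G \<omega> = g) = K \<and> cond_support M U2 (\<lambda>\<omega>. G \<omega> = g) = K)"
    and U_stat: "\<forall>g. \<forall>A\<in>sets borel.
        \<P>(\<omega> in M. U1 \<omega> \<in> A \<bar> G \<omega> = g) = \<P>(\<omega> in M. U2 \<omega> \<in> A \<bar> G \<omega> = g)"
    and U1_ci: "\<forall>s g. \<forall>A\<in>sets borel.
        \<P>(\<omega> in M. U1 \<omega> \<in> A \<and> G \<omega> = g \<bar> S1 \<omega> = s)
          = \<P>(\<omega> in M. U1 \<omega> \<in> A \<bar> S1 \<omega> = s) * \<P>(\<omega> in M. G \<omega> = g \<bar> S1 \<omega> = s)"
    and U2_ci: "\<forall>s g. \<forall>A\<in>sets borel.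
        \<P>(\<omega> in M. U2 \<omega> \<in> A \<and> G \<omega> = g \<bar> S2 \<omega> = s)
          = \<P>(\<omega> in M. U2 \<omega> \<in> A \<bar> S2 \<omega> = s) * \<P>(\<omega> in M. G \<omega> = g \<bar> S2 \<omega> = s)"
    (* missingness is absorbing *)
    and absorbing: "\<forall>\<omega>. \<not> S1 \<omega> \<longrightarrow> \<not> S2 \<omega>"
    (* monotonicity *)
    and monotonicity: "(\<forall>\<omega>. S21 \<omega> \<ge> S20 \<omega>) \<or> (\<forall>\<omega>. S21 \<omega> \<le> S20 \<omega>)"
    (* positivity: E[S_t | G = g] > 0 *)
    and pos: "\<forall>g. \<P>(\<omega> in M. S1 \<omega> \<bar> G \<omega> = g) > 0 \<and> \<P>(\<omega> in M. S2 \<omega> \<bar> G \<omega> = g) > 0"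
  shows "((\<forall>\<omega>. S21 \<omega> \<ge> S20 \<omega>) \<longrightarrow>
            \<P>(\<omega> in M. S21 \<omega> \<bar> \<not> G \<omega> \<and> S20 \<omega>) = 1 \<and>
            \<P>(\<omega> in M. S20 \<omega> \<bar> G \<omega> \<and> S21 \<omega>)
              = \<P>(\<omega> in M. S20 \<omega> \<bar> G \<omega>) / \<P>(\<omega> in M. S2 \<omega> \<bar> G \<omega>) \<and>
            \<P>(\<omega> in M. S20 \<omega> \<bar> G \<omega> \<and> S21 \<omega>)
              = (\<P>(\<omega> in M. S1 \<omega> \<bar> G \<omega>) / \<P>(\<omega> in M. S2 \<omega> \<bar> G \<omega>)) *
                (\<P>(\<omega> in M. S2 \<omega> \<bar> \<not> G \<omega>) / \<P>(\<omega> in M. S1 \<omega> \<bar> \<not> G \<omega>)) \<and>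
            \<P>(\<omega> in M. S20 \<omega> \<bar> G \<omega> \<and> S21 \<omega>) \<in> {0..1})
       \<and> ((\<forall>\<omega>. S21 \<omega> \<le> S20 \<omega>) \<longrightarrow>
            \<P>(\<omega> in M. S20 \<omega> \<bar> G \<omega> \<and> S21 \<omega>) = 1 \<and>
            \<P>(\<omega> in M. S21 \<omega> \<bar> \<not> G \<omega> \<and> S20 \<omega>)
              = \<P>(\<omega> in M. S21 \<omega> \<bar> \<not> G \<omega>) / \<P>(\<omega> in M. S2 \<omega> \<bar> \<not> G \<omega>) \<and>
            \<P>(\<omega> in M. S21 \<omega> \<bar> \<not> G \<omega> \<and> S20 \<omega>)
              = (\<P>(\<omega> in M. S1 \<omega> \<bar> \<not> G \<omega>) / \<P>(\<omega> in M. S2 \<omega> \<bar> \<not> G \<omega>)) *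
                (\<P>(\<omega> in M. S2 \<omega> \<bar> G \<omega>) / \<P>(\<omega> in M. S1 \<omega> \<bar> G \<omega>)) \<and>
            \<P>(\<omega> in M. S21 \<omega> \<bar> \<not> G \<omega> \<and> S20 \<omega>) \<in> {0..1})"
proof -
  interpret prob_space M by (rule P)
  have [measurable]: "Measurable.pred M G" "Measurable.pred M S1" "Measurable.pred M S20" "Measurable.pred M S21"
    using mG mS1 mS20 mS21 by (simp_all add: pred_def)
  note [measurable] = mU1 mU2
  define A1 where "A1 = {u. h0 u 1}"
  define A2 where "A2 = {u. h0 u 2}"
  define B2 where "B2 = {u. h1 u 2}"
  have uA1: "upset A1" unfolding A1_def by (rule upset_mono) (use h_mono in auto)
  have uA2: "upset A2" unfolding A2_def by (rule upset_mono) (use h_mono in auto)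
  have uB2: "upset B2" unfolding B2_def by (rule upset_mono) (use h_mono in auto)
  have S1eq: "S1 = (\<lambda>\<omega>. U1 \<omega> \<in> A1)" using sel1 unfolding A1_def by auto
  have S20eq: "S20 = (\<lambda>\<omega>. U2 \<omega> \<in> A2)" using sel2 unfolding A2_def by auto
  have S21eq: "S21 = (\<lambda>\<omega>. U2 \<omega> \<in> B2)" using sel2 unfolding B2_def by auto
  have cont: "\<forall>x. \<P>(\<omega> in M. U1 \<omega> = x) = 0" using U_cont by auto
  have ci: "\<forall>g. \<forall>C\<in>sets borel. \<P>(\<omega> in M. U1 \<omega> \<in> C \<and> G \<omega> = g \<bar> U1 \<omega> \<in> A1)
              = \<P>(\<omega> in M. U1 \<omega> \<in> C \<bar> U1 \<omega> \<in> A1) * \<P>(\<omega> in M. G \<omega> = g \<bar> U1 \<omega> \<in> A1)"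
    using U1_ci[THEN spec[of _ True]] unfolding S1eq by simp
  have posA: "\<forall>g. \<P>(\<omega> in M. U1 \<omega> \<in> A1 \<bar> G \<omega> = g) > 0" using pos unfolding S1eq by simp
  have p1: "\<P>(\<omega> in M. S1 \<omega> \<bar> G \<omega>) > 0" "\<P>(\<omega> in M. S2 \<omega> \<bar> G \<omega>) > 0"
    using pos[THEN spec[of _ True]] by simp_all
  have p0: "\<P>(\<omega> in M. S1 \<omega> \<bar> \<not> G \<omega>) > 0" "\<P>(\<omega> in M. S2 \<omega> \<bar> \<not> G \<omega>) > 0"
    using pos[THEN spec[of _ False]] by simp_all
  have supp: "cond_support M U1 (\<lambda>\<omega>. G \<omega> = g0) = cond_support M U1 (\<lambda>\<omega>. G \<omega> = (\<not>g0))" for g0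
  proof -
    obtain K where "\<forall>g. cond_support M U1 (\<lambda>\<omega>. G \<omega> = g) = K" using U_supp by blast
    then show ?thesis by metis
  qed
  show ?thesis
  proof (rule conjI; rule impI)
    assume mp: "\<forall>\<omega>. S21 \<omega> \<ge> S20 \<omega>"
    have absorb: "\<forall>\<omega>. G \<omega> = False \<longrightarrow> U2 \<omega> \<in> A2 \<longrightarrow> U1 \<omega> \<in> A1"
      using absorbing S2_def sel1 sel2 unfolding A1_def A2_def by auto
    obtain r where r: "\<forall>g. \<P>(\<omega> in M. U2 \<omega> \<in> A2 \<bar> G \<omega> = g) = r * \<P>(\<omega> in M. U1 \<omega> \<in> A1 \<bar> G \<omega> = g)"
      using key[OF mG mU1 mU2 uA1 uA2 U_stat ci cont supp absorb posA] by blast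
    have r1: "\<P>(\<omega> in M. S20 \<omega> \<bar> G \<omega>) = r * \<P>(\<omega> in M. S1 \<omega> \<bar> G \<omega>)"
      using r[THEN spec[of _ True]] unfolding S20eq S1eq by simp
    have r0: "\<P>(\<omega> in M. S20 \<omega> \<bar> \<not> G \<omega>) = r * \<P>(\<omega> in M. S1 \<omega> \<bar> \<not> G \<omega>)"
      using r[THEN spec[of _ False]] unfolding S20eq S1eq by simp
    have mon: "\<forall>\<omega>. S20 \<omega> \<longrightarrow> S21 \<omega>" using mp by auto
    show "\<P>(\<omega> in M. S21 \<omega> \<bar> \<not> G \<omega> \<and> S20 \<omega>) = 1 \<and>
            \<P>(\<omega> in M. S20 \<omega> \<bar> G \<omega> \<and> S21 \<omega>)
              = \<P>(\<omega> in M. S20 \<omega> \<bar> G \<omega>) / \<P>(\<omega> in M. S2 \<omega> \<bar> G \<omega>) \<and>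
            \<P>(\<omega> in M. S20 \<omega> \<bar> G \<omega> \<and> S21 \<omega>)
              = (\<P>(\<omega> in M. S1 \<omega> \<bar> G \<omega>) / \<P>(\<omega> in M. S2 \<omega> \<bar> G \<omega>)) *
                (\<P>(\<omega> in M. S2 \<omega> \<bar> \<not> G \<omega>) / \<P>(\<omega> in M. S1 \<omega> \<bar> \<not> G \<omega>)) \<and>
            \<P>(\<omega> in M. S20 \<omega> \<bar> G \<omega> \<and> S21 \<omega>) \<in> {0..1}"
      by (rule half[OF \<open>Measurable.pred M G\<close> \<open>Measurable.pred M S1\<close> \<open>Measurable.pred M S20\<close> \<open>Measurable.pred M S21\<close> S2_def mon r1 r0 p1 p0])
  next
    assume mn: "\<forall>\<omega>. S21 \<omega> \<le> S20 \<omega>"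
    have absorb: "\<forall>\<omega>. G \<omega> = True \<longrightarrow> U2 \<omega> \<in> B2 \<longrightarrow> U1 \<omega> \<in> A1"
      using absorbing S2_def sel1 sel2 unfolding A1_def B2_def by auto
    obtain r where r: "\<forall>g. \<P>(\<omega> in M. U2 \<omega> \<in> B2 \<bar> G \<omega> = g) = r * \<P>(\<omega> in M. U1 \<omega> \<in> A1 \<bar> G \<omega> = g)"
      using key[OF mG mU1 mU2 uA1 uB2 U_stat ci cont supp absorb posA] by blast
    have r1: "\<P>(\<omega> in M. S21 \<omega> \<bar> \<not> G \<omega>) = r * \<P>(\<omega> in M. S1 \<omega> \<bar> \<not> G \<omega>)"
      using r[THEN spec[of _ False]] unfolding S21eq S1eq by simp
    have r0: "\<P>(\<omega> in M. S21 \<omega> \<bar> \<not> \<not> G \<omega>) = r * \<P>(\<omega> in M. S1 \<omega> \<bar> \<not> \<not> G \<omega>)"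
      using r[THEN spec[of _ True]] unfolding S21eq S1eq by simp
    have mon: "\<forall>\<omega>. S21 \<omega> \<longrightarrow> S20 \<omega>" using mn by auto
    have S2': "\<forall>\<omega>. S2 \<omega> = (if \<not> G \<omega> then S20 \<omega> else S21 \<omega>)" using S2_def by auto
    have p1': "\<P>(\<omega> in M. S1 \<omega> \<bar> \<not> \<not> G \<omega>) > 0" "\<P>(\<omega> in M. S2 \<omega> \<bar> \<not> \<not> G \<omega>) > 0"
      using p1 by simp_all
    have "Measurable.pred M (\<lambda>\<omega>. \<not> G \<omega>)" by measurable
    note h = half[OF this \<open>Measurable.pred M S1\<close> \<open>Measurable.pred M S21\<close> \<open>Measurable.pred M S20\<close> S2' mon r1 r0 p0 p1']
    show "\<P>(\<omega> in M. S20 \<omega> \<bar> G \<omega> \<and> S21 \<omega>) = 1 \<and>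
            \<P>(\<omega> in M. S21 \<omega> \<bar> \<not> G \<omega> \<and> S20 \<omega>)
              = \<P>(\<omega> in M. S21 \<omega> \<bar> \<not> G \<omega>) / \<P>(\<omega> in M. S2 \<omega> \<bar> \<not> G \<omega>) \<and>
            \<P>(\<omega> in M. S21 \<omega> \<bar> \<not> G \<omega> \<and> S20 \<omega>)
              = (\<P>(\<omega> in M. S1 \<omega> \<bar> \<not> G \<omega>) / \<P>(\<omega> in M. S2 \<omega> \<bar> \<not> G \<omega>)) *
                (\<P>(\<omega> in M. S2 \<omega> \<bar> G \<omega>) / \<P>(\<omega> in M. S1 \<omega> \<bar> G \<omega>)) \<and>
            \<P>(\<omega> in M. S21 \<omega> \<bar> \<not> G \<omega> \<and> S20 \<omega>) \<in> {0..1}"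
      using h unfolding not_not .
  qed
qed

end
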